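(* Let $\mathbb K$ be a naturally ordered positive semiring, let $\mathrm{q}_{\mathrm{path}}=\exists x\exists y\exists z\,(R(x;y)\wedge S(y;z))$ with $\Sigma$ the key constraints stating that the first attribute of $R$ and the first attribute of $S$ are keys. Then for every $\mathbb K$-database $\mathfrak D$ with active domain $D$, \[\mathrm{mCA}_{\mathbb K}(\mathrm{q}_{\mathrm{path}},\Sigma,\mathfrak D)=\sum_{a\in D}\ \min_{b\in D:\,R^{\mathfrak D}(a,b)\neq0}\Big(R^{\mathfrak D}(a,b)\times\min_{c\in D:\,S^{\mathfrak D}(b,c)\neq 0}S^{\mathfrak D}(b,c)\Big),\] with the convention $\min(\emptyset)=0$. Equivalently, this value is the value on $\mathfrak D$ of the $\mathcal L_{\mathbb K}$-sentence $\exists x\,\nabla_{R(x,y)}y.\big(R(x,y)\times\nabla_{S(y,z)}z.\,S(y,z)\big)$, where $\nabla_G$ denotes guarded minimization (minimum over the elements satisfying the guard with non-zero value, and $0$ if there are none).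
   Context: A commutative semiring $\mathbb K=(K,+,\times,0,1)$ is positive if $a+b=0$ implies $a=b=0$ and it has no zero divisors; naturally ordered if $a\le_{\mathbb K}b:\iff\exists c\,(a+c=b)$ is a total order; minima are w.r.t. $\le_{\mathbb K}$. A $\mathbb K$-database $\mathfrak D$ assigns to $R,S$ binary functions $R^{\mathfrak D},S^{\mathfrak D}:\mathrm A^2\to K$ with finite support; the active domain $D$ is the non-empty set of values occurring in tuples with non-zero annotation. $\mathfrak D'\subseteq\mathfrak D$ means supports are included and values agree on the support of $\mathfrak D'$. A repair of $\mathfrak D$ is a $\subseteq$-maximal $\mathfrak D'\subseteq\mathfrak D$ such that no two distinct tuples with non-zero annotation in $R^{\mathfrak D'}$ (resp. $S^{\mathfrak D'}$) share their first component. The value of a closed CQ $\exists\vec y(R_1(\vec z_1)\wedge\dots\wedge R_k(\vec z_k))$ on $\mathfrak D$ is $\sum_{\vec a\in D^{|\vec y|}}\prod_i R_i^{\mathfrak D}(\vec z_i[\vec a/\vec y])$, and $\mathrm{mCA}_{\mathbb K}(q,\Sigma,\mathfrak D)$ is the minimum of this value over all repairs of $\mathfrak D$. *)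

theory Defs
  imports Main
begin

definition nat_le :: "'k::comm_semiring_1 \<Rightarrow> 'k \<Rightarrow> bool" where
  "nat_le a b \<longleftrightarrow> (\<exists>c. a + c = b)"

definition positive_semiring :: "'k::comm_semiring_1 itself \<Rightarrow> bool" where
  "positive_semiring _ \<longleftrightarrow>
     (\<forall>a b::'k. a + b = 0 \<longrightarrow> a = 0 \<and> b = 0) \<and>
     (\<forall>a b::'k. a * b = 0 \<longrightarrow> a = 0 \<or> b = 0)"

text \<open>Naturally ordered: the natural preorder is a total order
  (reflexivity and transitivity hold automatically; we require antisymmetry and totality).\<close>
definition naturally_ordered :: "'k::comm_semiring_1 itself \<Rightarrow> bool" where
  "naturally_ordered _ \<longleftrightarrow>
     (\<forall>a b::'k. nat_le a b \<and> nat_le b a \<longrightarrow> a = b) \<and>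
     (\<forall>a b::'k. nat_le a b \<or> nat_le b a)"

definition kmin :: "'k::comm_semiring_1 set \<Rightarrow> 'k" where
  "kmin A = (if A = {} then 0 else (THE m. m \<in> A \<and> (\<forall>x\<in>A. nat_le m x)))"

definition supp :: "('a \<Rightarrow> 'a \<Rightarrow> 'k::zero) \<Rightarrow> ('a \<times> 'a) set" where
  "supp R = {(a, b). R a b \<noteq> 0}"

definition is_kdb :: "('a \<Rightarrow> 'a \<Rightarrow> 'k::zero) \<Rightarrow> ('a \<Rightarrow> 'a \<Rightarrow> 'k) \<Rightarrow> bool" where
  "is_kdb R S \<longleftrightarrow> finite (supp R) \<and> finite (supp S)"

definition adom :: "('a \<Rightarrow> 'a \<Rightarrow> 'k::zero) \<Rightarrow> ('a \<Rightarrow> 'a \<Rightarrow> 'k) \<Rightarrow> 'a set" where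
  "adom R S = {x. \<exists>y. R x y \<noteq> 0 \<or> R y x \<noteq> 0 \<or> S x y \<noteq> 0 \<or> S y x \<noteq> 0}"

definition subrel :: "('a \<Rightarrow> 'a \<Rightarrow> 'k::zero) \<Rightarrow> ('a \<Rightarrow> 'a \<Rightarrow> 'k) \<Rightarrow> bool" where
  "subrel R' R \<longleftrightarrow> supp R' \<subseteq> supp R \<and> (\<forall>(a, b)\<in>supp R'. R' a b = R a b)"

definition subdb :: "('a \<Rightarrow> 'a \<Rightarrow> 'k::zero) \<Rightarrow> ('a \<Rightarrow> 'a \<Rightarrow> 'k) \<Rightarrow>
    ('a \<Rightarrow> 'a \<Rightarrow> 'k) \<Rightarrow> ('a \<Rightarrow> 'a \<Rightarrow> 'k) \<Rightarrow> bool" where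
  "subdb R' S' R S \<longleftrightarrow> subrel R' R \<and> subrel S' S"

definition key_ok :: "('a \<Rightarrow> 'a \<Rightarrow> 'k::zero) \<Rightarrow> bool" where
  "key_ok R \<longleftrightarrow> (\<forall>a b b'. R a b \<noteq> 0 \<longrightarrow> R a b' \<noteq> 0 \<longrightarrow> b = b')"

definition satisfies_keys :: "('a \<Rightarrow> 'a \<Rightarrow> 'k::zero) \<Rightarrow> ('a \<Rightarrow> 'a \<Rightarrow> 'k) \<Rightarrow> bool" where
  "satisfies_keys R S \<longleftrightarrow> key_ok R \<and> key_ok S"

definition is_repair :: "('a \<Rightarrow> 'a \<Rightarrow> 'k::zero) \<Rightarrow> ('a \<Rightarrow> 'a \<Rightarrow> 'k) \<Rightarrow>
    ('a \<Rightarrow> 'a \<Rightarrow> 'k) \<Rightarrow> ('a \<Rightarrow> 'a \<Rightarrow> 'k) \<Rightarrow> bool" where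
  "is_repair R S R' S' \<longleftrightarrow>
     subdb R' S' R S \<and> satisfies_keys R' S' \<and>
     (\<forall>R'' S''. subdb R'' S'' R S \<and> satisfies_keys R'' S'' \<and> subdb R' S' R'' S''
        \<longrightarrow> R'' = R' \<and> S'' = S')"

definition qpath_val :: "('a \<Rightarrow> 'a \<Rightarrow> 'k::comm_semiring_1) \<Rightarrow> ('a \<Rightarrow> 'a \<Rightarrow> 'k) \<Rightarrow> 'k" where
  "qpath_val R S = (\<Sum>(x, y, z) \<in> adom R S \<times> adom R S \<times> adom R S. R x y * S y z)"

definition mCA_qpath :: "('a \<Rightarrow> 'a \<Rightarrow> 'k::comm_semiring_1) \<Rightarrow> ('a \<Rightarrow> 'a \<Rightarrow> 'k) \<Rightarrow> 'k" where
  "mCA_qpath R S = kmin {qpath_val R' S' | R' S'. is_repair R S R' S'}"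

end

theory Submission
  imports Defs
begin

lemma nat_le_refl: "nat_le (a::'k::comm_semiring_1) a"
  unfolding nat_le_def by (rule exI[of _ 0]) simp

lemma nat_le_trans: "nat_le (a::'k::comm_semiring_1) b \<Longrightarrow> nat_le b c \<Longrightarrow> nat_le a c"
  unfolding nat_le_def by (metis add.assoc)

lemma nat_le_0: "nat_le 0 (a::'k::comm_semiring_1)"
  unfolding nat_le_def by auto

lemma nat_le_mult: "nat_le (a::'k::comm_semiring_1) b \<Longrightarrow> nat_le (c*a) (c*b)"
  unfolding nat_le_def by (metis distrib_left)

lemma nat_le_sum:
  assumes "\<And>x. x \<in> A \<Longrightarrow> nat_le (f x) (g x :: 'k::comm_semiring_1)"
  shows "nat_le (sum f A) (sum g A)"
proof (cases "finite A")
  case True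
  then show ?thesis using assms
  proof (induction A rule: finite_induct)
    case empty then show ?case by (simp add: nat_le_refl)
  next
    case (insert x F)
    then obtain c where c: "f x + c = g x" unfolding nat_le_def by blast
    from insert obtain d where d: "sum f F + d = sum g F" unfolding nat_le_def by blast
    have "(f x + sum f F) + (c + d) = g x + sum g F" unfolding c[symmetric] d[symmetric] by (simp add: algebra_simps)
    then have "nat_le (f x + sum f F) (g x + sum g F)" unfolding nat_le_def by blast
    then show ?case using insert.hyps by simp
  qed
next
  case False then show ?thesis by (simp add: nat_le_refl)
qed

lemma ex_min:
  assumes no: "naturally_ordered TYPE('k::comm_semiring_1)"
    and "finite A" "A \<noteq> {}"
  shows "\<exists>m\<in>A. \<forall>x\<in>(A::'k set). nat_le m x"
  using assms(2,3)
proof (induction A rule: finite_ne_induct)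
  case (singleton x) then show ?case by (simp add: nat_le_refl)
next
  case (insert x F)
  then obtain m where m: "m \<in> F" "\<forall>y\<in>F. nat_le m y" by blast
  have tot: "nat_le m x \<or> nat_le x m" using no unfolding naturally_ordered_def by blast
  then show ?case
  proof
    assume "nat_le m x" then show ?thesis using m by auto
  next
    assume "nat_le x m" then show ?thesis using m nat_le_trans nat_le_refl by blast
  qed
qed

lemma kmin_eq:
  assumes no: "naturally_ordered TYPE('k::comm_semiring_1)"
    and "m \<in> A" "\<forall>x\<in>(A::'k set). nat_le m x"
  shows "kmin A = m"
proof -
  have "(THE m. m \<in> A \<and> (\<forall>x\<in>A. nat_le m x)) = m"
    apply (rule the_equality)
    using assms unfolding naturally_ordered_def by blast+
  then show ?thesis using assms(2) unfolding kmin_def by auto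
qed

lemma kmin_prop:
  assumes no: "naturally_ordered TYPE('k::comm_semiring_1)"
    and "finite A" "A \<noteq> {}"
  shows "kmin A \<in> A \<and> (\<forall>x\<in>(A::'k set). nat_le (kmin A) x)"
  using ex_min[OF assms] kmin_eq[OF no] by metis

lemma sum_key:
  assumes "finite D" "y0 \<in> D" "\<And>y. F y \<noteq> (0::'k::comm_semiring_1) \<Longrightarrow> y = y0"
  shows "(\<Sum>y\<in>D. F y * h y) = F y0 * h y0"
proof -
  have "(\<Sum>y\<in>D. F y * h y) = F y0 * h y0 + (\<Sum>y\<in>D - {y0}. F y * h y)"
    using assms(1,2) by (simp add: sum.remove)
  also have "(\<Sum>y\<in>D - {y0}. F y * h y) = 0"
  proof (rule sum.neutral, rule ballI)
    fix y assume "y \<in> D - {y0}"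
    then have "F y = 0" using assms(3) by blast
    then show "F y * h y = 0" by simp
  qed
  finally show ?thesis by simp
qed

lemma finite_adom:
  assumes "is_kdb R S" shows "finite (adom R S)"
proof -
  have "adom R S \<subseteq> fst ` supp R \<union> snd ` supp R \<union> fst ` supp S \<union> snd ` supp S"
    unfolding adom_def supp_def by (force simp: image_iff)
  then show ?thesis using assms unfolding is_kdb_def by (meson finite_UnI finite_imageI finite_subset)
qed

lemma repair_total_R:
  assumes "is_repair R S R' S'" "R x b \<noteq> 0"
  shows "\<exists>y. R' x y \<noteq> 0"
proof (rule ccontr)
  assume nz: "\<nexists>y. R' x y \<noteq> 0"
  define R'' where "R'' u v = (if u = x \<and> v = b then R x b else R' u v)" for u v
  have sub: "subdb R' S' R S" and keys: "satisfies_keys R' S'"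
    and max: "\<And>R2 S2. subdb R2 S2 R S \<Longrightarrow> satisfies_keys R2 S2 \<Longrightarrow> subdb R' S' R2 S2
        \<Longrightarrow> R2 = R' \<and> S2 = S'"
    using assms(1) unfolding is_repair_def by blast+
  have "subdb R'' S' R S"
    using sub assms(2) unfolding subdb_def subrel_def supp_def R''_def by auto
  moreover have "satisfies_keys R'' S'"
    using keys nz unfolding satisfies_keys_def key_ok_def R''_def by auto
  moreover have "subdb R' S' R'' S'"
    using nz unfolding subdb_def subrel_def supp_def R''_def by auto
  ultimately have "R'' = R'" using max by blast
  then have "R'' x b = R' x b" by simp
  then show False using nz assms(2) unfolding R''_def by auto
qed

lemma repair_total_S:
  assumes "is_repair R S R' S'" "S x b \<noteq> 0"
  shows "\<exists>y. S' x y \<noteq> 0"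
proof (rule ccontr)
  assume nz: "\<nexists>y. S' x y \<noteq> 0"
  define S'' where "S'' u v = (if u = x \<and> v = b then S x b else S' u v)" for u v
  have sub: "subdb R' S' R S" and keys: "satisfies_keys R' S'"
    and max: "\<And>R2 S2. subdb R2 S2 R S \<Longrightarrow> satisfies_keys R2 S2 \<Longrightarrow> subdb R' S' R2 S2
        \<Longrightarrow> R2 = R' \<and> S2 = S'"
    using assms(1) unfolding is_repair_def by blast+
  have "subdb R' S'' R S"
    using sub assms(2) unfolding subdb_def subrel_def supp_def S''_def by auto
  moreover have "satisfies_keys R' S''"
    using keys nz unfolding satisfies_keys_def key_ok_def S''_def by auto
  moreover have "subdb R' S' R' S''"
    using nz unfolding subdb_def subrel_def supp_def S''_def by auto
  ultimately have "S'' = S'" using max by blast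
  then have "S'' x b = S' x b" by simp
  then show False using nz assms(2) unfolding S''_def by auto
qed

lemma qpath_val_sub:
  assumes "subdb R' S' R S" "is_kdb R S"
  shows "qpath_val R' S' = (\<Sum>x\<in>adom R S. \<Sum>y\<in>adom R S. \<Sum>z\<in>adom R S. R' x y * S' y z)"
proof -
  let ?D = "adom R S" and ?D' = "adom R' S'"
  have fin: "finite ?D" using finite_adom[OF assms(2)] .
  have RR: "\<And>x y. R' x y \<noteq> 0 \<Longrightarrow> R x y \<noteq> 0" and SS: "\<And>x y. S' x y \<noteq> 0 \<Longrightarrow> S x y \<noteq> 0"
    using assms(1) unfolding subdb_def subrel_def supp_def by auto
  have sub: "?D' \<subseteq> ?D" unfolding adom_def using RR SS by blast
  have "qpath_val R' S' = (\<Sum>(x, y, z) \<in> ?D \<times> ?D \<times> ?D. R' x y * S' y z)"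
    unfolding qpath_val_def
  proof (rule sum.mono_neutral_left)
    show "finite (?D \<times> ?D \<times> ?D)" using fin by simp
    show "?D' \<times> ?D' \<times> ?D' \<subseteq> ?D \<times> ?D \<times> ?D" using sub by auto
    show "\<forall>i\<in>?D \<times> ?D \<times> ?D - ?D' \<times> ?D' \<times> ?D'. (case i of (x, y, z) \<Rightarrow> R' x y * S' y z) = 0"
    proof
      fix i assume "i \<in> ?D \<times> ?D \<times> ?D - ?D' \<times> ?D' \<times> ?D'"
      then obtain x y z where i: "i = (x,y,z)" and nin: "\<not> (x \<in> ?D' \<and> y \<in> ?D' \<and> z \<in> ?D')" by auto
      show "(case i of (x, y, z) \<Rightarrow> R' x y * S' y z) = 0"
      proof (rule ccontr)
        assume "(case i of (x, y, z) \<Rightarrow> R' x y * S' y z) \<noteq> 0"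
        then have "R' x y \<noteq> 0" "S' y z \<noteq> 0" using i by auto
        then have "x \<in> ?D' \<and> y \<in> ?D' \<and> z \<in> ?D'" unfolding adom_def by blast
        then show False using nin by blast
      qed
    qed
  qed
  also have "\<dots> = (\<Sum>x\<in>?D. \<Sum>y\<in>?D. \<Sum>z\<in>?D. R' x y * S' y z)"
    by (simp add: sum.cartesian_product case_prod_beta)
  finally show ?thesis .
qed

theorem mainTheorem8:
  fixes R S :: "'a \<Rightarrow> 'a \<Rightarrow> 'k::comm_semiring_1"
  assumes "positive_semiring TYPE('k)"
    and "naturally_ordered TYPE('k)"
    and "is_kdb R S"
    and "adom R S \<noteq> {}"
  shows "mCA_qpath R S =
    (\<Sum>a \<in> adom R S. kmin {R a b * kmin {S b c | c. c \<in> adom R S \<and> S b c \<noteq> 0}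
                             | b. b \<in> adom R S \<and> R a b \<noteq> 0})"
proof -
  note no = assms(2)
  let ?D = "adom R S"
  have finD: "finite ?D" using finite_adom[OF assms(3)] .
  have inDR: "\<And>x y. R x y \<noteq> 0 \<Longrightarrow> x \<in> ?D \<and> y \<in> ?D"
    unfolding adom_def by blast
  have inDS: "\<And>x y. S x y \<noteq> 0 \<Longrightarrow> x \<in> ?D \<and> y \<in> ?D"
    unfolding adom_def by blast
  define mS where "mS b = kmin {S b c | c. c \<in> ?D \<and> S b c \<noteq> 0}" for b
  define T where "T a = kmin {R a b * mS b | b. b \<in> ?D \<and> R a b \<noteq> 0}" for a
  have finS: "finite {S b c | c. c \<in> ?D \<and> S b c \<noteq> 0}" for b
    by (rule finite_image_set) (use finD in auto)
  have finT: "finite {R a b * mS b | b. b \<in> ?D \<and> R a b \<noteq> 0}" for a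
    by (rule finite_image_set) (use finD in auto)
  have mS: "\<exists>c0. S b c0 \<noteq> 0 \<and> mS b = S b c0 \<and> (\<forall>c. S b c \<noteq> 0 \<longrightarrow> nat_le (S b c0) (S b c))"
    if "S b c \<noteq> 0" for b c
  proof -
    have ne: "{S b c | c. c \<in> ?D \<and> S b c \<noteq> 0} \<noteq> {}" using that inDS by blast
    from kmin_prop[OF no finS ne] obtain c0 where c0: "c0 \<in> ?D" "S b c0 \<noteq> 0"
      "mS b = S b c0" "\<forall>x\<in>{S b c | c. c \<in> ?D \<and> S b c \<noteq> 0}. nat_le (mS b) x"
      unfolding mS_def by auto
    show ?thesis
      by (rule exI[of _ c0]) (use c0 inDS in auto)
  qed
  have mS0: "mS b = 0" if "\<forall>c. S b c = 0" for b
    unfolding mS_def kmin_def using that by simp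
  have T: "\<exists>b0. R a b0 \<noteq> 0 \<and> T a = R a b0 * mS b0 \<and>
     (\<forall>b. R a b \<noteq> 0 \<longrightarrow> nat_le (R a b0 * mS b0) (R a b * mS b))"
    if "R a b \<noteq> 0" for a b
  proof -
    have ne: "{R a b * mS b | b. b \<in> ?D \<and> R a b \<noteq> 0} \<noteq> {}" using that inDR by blast
    from kmin_prop[OF no finT ne] obtain b0 where b0: "b0 \<in> ?D" "R a b0 \<noteq> 0"
      "T a = R a b0 * mS b0" "\<forall>x\<in>{R a b * mS b | b. b \<in> ?D \<and> R a b \<noteq> 0}. nat_le (T a) x"
      unfolding T_def by auto
    show ?thesis
      by (rule exI[of _ b0]) (use b0 inDR in auto)
  qed
  have T0: "T a = 0" if "\<forall>b. R a b = 0" for a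
    unfolding T_def kmin_def using that by simp
  define g where "g b = (SOME c0. S b c0 \<noteq> 0 \<and> mS b = S b c0)" for b
  define f where "f a = (SOME b0. R a b0 \<noteq> 0 \<and> T a = R a b0 * mS b0)" for a
  have g: "S b (g b) \<noteq> 0 \<and> mS b = S b (g b)" if "S b c \<noteq> 0" for b c
  proof -
    have "\<exists>c0. S b c0 \<noteq> 0 \<and> mS b = S b c0" using mS[OF that] by blast
    then show ?thesis unfolding g_def by (rule someI_ex)
  qed
  have f: "R a (f a) \<noteq> 0 \<and> T a = R a (f a) * mS (f a)" if "R a b \<noteq> 0" for a b
  proof -
    have "\<exists>b0. R a b0 \<noteq> 0 \<and> T a = R a b0 * mS b0" using T[OF that] by blast
    then show ?thesis unfolding f_def by (rule someI_ex)
  qed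
  define R0 where "R0 a b = (if b = f a then R a b else 0)" for a b
  define S0 where "S0 b c = (if c = g b then S b c else 0)" for b c
  have rep: "is_repair R S R0 S0"
    unfolding is_repair_def
  proof (intro conjI allI impI)
    show "subdb R0 S0 R S" unfolding subdb_def subrel_def supp_def R0_def S0_def by auto
    show "satisfies_keys R0 S0" unfolding satisfies_keys_def key_ok_def R0_def S0_def by auto
    fix R'' S'' assume H: "subdb R'' S'' R S \<and> satisfies_keys R'' S'' \<and> subdb R0 S0 R'' S''"
    show "R'' = R0"
    proof (intro ext)
      fix a b
      show "R'' a b = R0 a b"
      proof (cases "R0 a b = 0")
        case False then show ?thesis using H unfolding subdb_def subrel_def supp_def by auto
      next
        case True
        show ?thesis
        proof (rule ccontr)
          assume ne: "R'' a b \<noteq> R0 a b"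
          then have r: "R'' a b \<noteq> 0" using True by simp
          then have rab: "R a b \<noteq> 0" using H unfolding subdb_def subrel_def supp_def by auto
          then have fa: "R a (f a) \<noteq> 0" using f by blast
          then have "R0 a (f a) \<noteq> 0" unfolding R0_def by simp
          then have "R'' a (f a) \<noteq> 0" using H unfolding subdb_def subrel_def supp_def by auto
          then have "b = f a" using r H unfolding satisfies_keys_def key_ok_def by blast
          then show False using True rab unfolding R0_def by simp
        qed
      qed
    qed
    show "S'' = S0"
    proof (intro ext)
      fix a b
      show "S'' a b = S0 a b"
      proof (cases "S0 a b = 0")
        case False then show ?thesis using H unfolding subdb_def subrel_def supp_def by auto
      next
        case True
        show ?thesis
        proof (rule ccontr)
          assume ne: "S'' a b \<noteq> S0 a b"
          then have r: "S'' a b \<noteq> 0" using True by simp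
          then have rab: "S a b \<noteq> 0" using H unfolding subdb_def subrel_def supp_def by auto
          then have fa: "S a (g a) \<noteq> 0" using g by blast
          then have "S0 a (g a) \<noteq> 0" unfolding S0_def by simp
          then have "S'' a (g a) \<noteq> 0" using H unfolding subdb_def subrel_def supp_def by auto
          then have "b = g a" using r H unfolding satisfies_keys_def key_ok_def by blast
          then show False using True rab unfolding S0_def by simp
        qed
      qed
    qed
  qed
  have subR: "R' x y \<noteq> 0 \<Longrightarrow> R x y \<noteq> 0 \<and> R' x y = R x y" if "is_repair R S R' S'" for R' S' x y
    using that unfolding is_repair_def subdb_def subrel_def supp_def by auto
  have subS: "S' x y \<noteq> 0 \<Longrightarrow> S x y \<noteq> 0 \<and> S' x y = S x y" if "is_repair R S R' S'" for R' S' x y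
    using that unfolding is_repair_def subdb_def subrel_def supp_def by auto
  have keyR: "R' x y \<noteq> 0 \<Longrightarrow> R' x y' \<noteq> 0 \<Longrightarrow> y = y'" if "is_repair R S R' S'" for R' S' x y y'
    using that unfolding is_repair_def satisfies_keys_def key_ok_def by blast
  have keyS: "S' x y \<noteq> 0 \<Longrightarrow> S' x y' \<noteq> 0 \<Longrightarrow> y = y'" if "is_repair R S R' S'" for R' S' x y y'
    using that unfolding is_repair_def satisfies_keys_def key_ok_def by blast
  have Wrep: "\<exists>z0. S' y z0 \<noteq> 0 \<and> S y z0 \<noteq> 0 \<and> (\<Sum>z\<in>?D. S' y z) = S y z0"
    if rp: "is_repair R S R' S'" and "S y c \<noteq> 0" for R' S' y c
  proof -
    obtain z0 where z0: "S' y z0 \<noteq> 0" using repair_total_S[OF rp \<open>S y c \<noteq> 0\<close>] by blast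
    have sz: "S y z0 \<noteq> 0" "S' y z0 = S y z0" using subS[OF rp z0] by auto
    have "(\<Sum>z\<in>?D. S' y z * 1) = S' y z0 * 1"
      by (rule sum_key[OF finD]) (use inDS sz keyS[OF rp] z0 in auto)
    then show ?thesis using z0 sz by (intro exI[of _ z0]) auto
  qed
  have Wrep0: "(\<Sum>z\<in>?D. S' y z) = 0"
    if rp: "is_repair R S R' S'" and "\<forall>c. S y c = 0" for R' S' y
    using that subS[OF rp] by (metis (mono_tags, lifting) sum.neutral)
  have Vrep: "\<exists>y0. R' x y0 \<noteq> 0 \<and> R x y0 \<noteq> 0 \<and>
      (\<Sum>y\<in>?D. \<Sum>z\<in>?D. R' x y * S' y z) = R x y0 * (\<Sum>z\<in>?D. S' y0 z)"
    if rp: "is_repair R S R' S'" and "R x b \<noteq> 0" for R' S' x b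
  proof -
    obtain y0 where y0: "R' x y0 \<noteq> 0" using repair_total_R[OF rp \<open>R x b \<noteq> 0\<close>] by blast
    have sy: "R x y0 \<noteq> 0" "R' x y0 = R x y0" using subR[OF rp y0] by auto
    have "(\<Sum>y\<in>?D. \<Sum>z\<in>?D. R' x y * S' y z) = (\<Sum>y\<in>?D. R' x y * (\<Sum>z\<in>?D. S' y z))"
      by (simp add: sum_distrib_left)
    also have "\<dots> = R' x y0 * (\<Sum>z\<in>?D. S' y0 z)"
      by (rule sum_key[OF finD]) (use inDR sy keyR[OF rp] y0 in auto)
    finally show ?thesis using y0 sy by (intro exI[of _ y0]) auto
  qed
  have Vrep0: "(\<Sum>y\<in>?D. \<Sum>z\<in>?D. R' x y * S' y z) = 0"
    if rp: "is_repair R S R' S'" and "\<forall>b. R x b = 0" for R' S' x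
  proof -
    have "R' x y = 0" for y using that subR[OF rp] by metis
    then show ?thesis by simp
  qed
  have lower: "nat_le (T x) (\<Sum>y\<in>?D. \<Sum>z\<in>?D. R' x y * S' y z)"
    if rp: "is_repair R S R' S'" for R' S' x
  proof (cases "\<exists>b. R x b \<noteq> 0")
    case False
    then show ?thesis using T0[of x] nat_le_0 by auto
  next
    case True
    then obtain b where b: "R x b \<noteq> 0" by blast
    obtain y0 where y0: "R' x y0 \<noteq> 0" "R x y0 \<noteq> 0"
      "(\<Sum>y\<in>?D. \<Sum>z\<in>?D. R' x y * S' y z) = R x y0 * (\<Sum>z\<in>?D. S' y0 z)"
      using Vrep[OF rp b] by blast
    obtain b0 where b0: "T x = R x b0 * mS b0"
      "\<forall>b. R x b \<noteq> 0 \<longrightarrow> nat_le (R x b0 * mS b0) (R x b * mS b)"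
      using T[OF b] by blast
    have t1: "nat_le (T x) (R x y0 * mS y0)" using b0 y0(2) by auto
    show ?thesis
    proof (cases "\<exists>c. S y0 c \<noteq> 0")
      case False
      then have "mS y0 = 0" "(\<Sum>z\<in>?D. S' y0 z) = 0" using mS0 Wrep0[OF rp] by auto
      then show ?thesis using t1 y0(3) by simp
    next
      case True
      then obtain c where c: "S y0 c \<noteq> 0" by blast
      obtain z0 where z0: "S y z0 \<noteq> 0" "(\<Sum>z\<in>?D. S' y0 z) = S y0 z0" if "y = y0" for y
        using Wrep[OF rp c] by blast
      obtain c0 where c0: "mS y0 = S y0 c0" "\<forall>c. S y0 c \<noteq> 0 \<longrightarrow> nat_le (S y0 c0) (S y0 c)"
        using mS[OF c] by blast
      have "nat_le (mS y0) (S y0 z0)" using c0 z0 by auto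
      then have "nat_le (R x y0 * mS y0) (R x y0 * S y0 z0)" by (rule nat_le_mult)
      then show ?thesis using t1 y0(3) z0 nat_le_trans by metis
    qed
  qed
  have exact: "(\<Sum>y\<in>?D. \<Sum>z\<in>?D. R0 x y * S0 y z) = T x" for x
  proof (cases "\<exists>b. R x b \<noteq> 0")
    case False
    then show ?thesis using T0[of x] Vrep0[OF rep] by auto
  next
    case True
    then obtain b where b: "R x b \<noteq> 0" by blast
    obtain y0 where y0: "R0 x y0 \<noteq> 0" "R x y0 \<noteq> 0"
      "(\<Sum>y\<in>?D. \<Sum>z\<in>?D. R0 x y * S0 y z) = R x y0 * (\<Sum>z\<in>?D. S0 y0 z)"
      using Vrep[OF rep b] by blast
    have y0f: "y0 = f x" using y0(1) unfolding R0_def by (auto split: if_splits)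
    have Tx: "T x = R x y0 * mS y0" using f[OF b] y0f by simp
    show ?thesis
    proof (cases "\<exists>c. S y0 c \<noteq> 0")
      case False
      then have "mS y0 = 0" "(\<Sum>z\<in>?D. S0 y0 z) = 0" using mS0 Wrep0[OF rep] by auto
      then show ?thesis using Tx y0(3) by simp
    next
      case True
      then obtain c where c: "S y0 c \<noteq> 0" by blast
      obtain z0 where z0: "S0 y0 z0 \<noteq> 0" "(\<Sum>z\<in>?D. S0 y0 z) = S y0 z0"
        using Wrep[OF rep c] by blast
      have "z0 = g y0" using z0(1) unfolding S0_def by (auto split: if_splits)
      then have "mS y0 = S y0 z0" using g[OF c] by simp
      then show ?thesis using Tx y0(3) z0 by simp
    qed
  qed
  have subdbR: "subdb R' S' R S" if "is_repair R S R' S'" for R' S'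
    using that unfolding is_repair_def by blast
  have "mCA_qpath R S = (\<Sum>x\<in>?D. T x)"
    unfolding mCA_qpath_def
  proof (rule kmin_eq[OF no])
    show "(\<Sum>x\<in>?D. T x) \<in> {qpath_val R' S' |R' S'. is_repair R S R' S'}"
    proof -
      have "qpath_val R0 S0 = (\<Sum>x\<in>?D. T x)"
        using qpath_val_sub[OF subdbR[OF rep] assms(3)] exact by simp
      then have "\<exists>R' S'. (\<Sum>x\<in>?D. T x) = qpath_val R' S' \<and> is_repair R S R' S'" using rep by metis
      then show ?thesis by simp
    qed
    show "\<forall>v\<in>{qpath_val R' S' |R' S'. is_repair R S R' S'}. nat_le (\<Sum>x\<in>?D. T x) v"
    proof
      fix v assume "v \<in> {qpath_val R' S' |R' S'. is_repair R S R' S'}"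
      then obtain R' S' where rp: "is_repair R S R' S'" and v: "v = qpath_val R' S'" by blast
      show "nat_le (\<Sum>x\<in>?D. T x) v"
        unfolding v qpath_val_sub[OF subdbR[OF rp] assms(3)]
        by (rule nat_le_sum) (rule lower[OF rp])
    qed
  qed
  then show ?thesis unfolding T_def mS_def .
qed

end
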